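(* For $i=1,2,3$ let $M_i\in2^{\mathbb{Z}}$, $K_i\in2^{\mathbb{N}}$, $I_i\subset\lambda^{-1}\mathbb{Z}$, and let $f_i\in L^2(\mathbb{R}^2\times\lambda^{-1}\mathbb{Z})$ be supported in $D_{\lambda,M_i,\le K_i}\cap\{(\tau,\xi,q):q\in I_i\}$. Then \[\int_{\mathbb{R}^2\times\lambda^{-1}\mathbb{Z}}|f_1|\star|f_2|\cdot|f_3|\,d\tau\,d\xi\,dq\lesssim M_{\min}^{1/2}K_{\min}^{1/2}|I|_{\min}^{1/2}\prod_{i=1}^3\|f_i\|_{L^2},\] where $M_{\min}=\min_iM_i$, $K_{\min}=\min_iK_i$, $|I|_{\min}=\min_i|I_i|$, and the implicit constant is independent of $\lambda$ and of the parameters.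
   Context: Fix $\lambda\ge1$; on $\lambda^{-1}\mathbb{Z}$ use $dq=\lambda^{-1}\times$(counting measure), and $|I|$ for $I\subset\lambda^{-1}\mathbb{Z}$ denotes its $dq$-measure. $\star$ is the convolution on $\mathbb{R}^2\times\lambda^{-1}\mathbb{Z}$: $(f\star g)(\tau,\xi,q)=\int f(\tau-\tau',\xi-\xi',q-q')g(\tau',\xi',q')\,d\tau'd\xi'dq'$. $\omega(\xi,q)=\xi^3+q^2/\xi$, $\sigma(\tau,\xi,q)=\tau-\omega(\xi,q)$, $\langle x\rangle=(1+x^2)^{1/2}$. For $M\in2^{\mathbb{Z}}$, $K\in2^{\mathbb{N}}$: $D_{\lambda,M,\le K}=\{(\tau,\xi,q)\in\mathbb{R}^2\times\lambda^{-1}\mathbb{Z}: M/2\le|\xi|\le3M/2,\ \langle\sigma(\tau,\xi,q)\rangle\le K\}$. *)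

theory Defs
  imports "HOL-Analysis.Analysis"
begin

text \<open>Integration uses Lebesgue measure in (tau, xi) and
  lambda^{-1} times counting measure in q (q = k / lambda, k integer).\<close>

definition omega :: "real \<Rightarrow> real \<Rightarrow> real" where
  "omega \<xi> q = \<xi> ^ 3 + q ^ 2 / \<xi>"

definition sigma :: "real \<times> real \<times> real \<Rightarrow> real" where
  "sigma p = (case p of (\<tau>, \<xi>, q) \<Rightarrow> \<tau> - omega \<xi> q)"

definition japan :: "real \<Rightarrow> real" where
  "japan x = sqrt (1 + x ^ 2)"

definition lattice :: "real \<Rightarrow> real set" where
  "lattice lam = {q. \<exists>k::int. q = of_int k / lam}"

definition Dset :: "real \<Rightarrow> real \<Rightarrow> real \<Rightarrow> (real \<times> real \<times> real) set" where
  "Dset lam M K = {(\<tau>, \<xi>, q). q \<in> lattice lam \<and> M / 2 \<le> \<bar>\<xi>\<bar> \<and> \<bar>\<xi>\<bar> \<le> 3 * M / 2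
                     \<and> japan (sigma (\<tau>, \<xi>, q)) \<le> K}"

definition lint :: "real \<Rightarrow> (real \<times> real \<times> real \<Rightarrow> ennreal) \<Rightarrow> ennreal" where
  "lint lam F = (\<integral>\<^sup>+ p. (\<integral>\<^sup>+ k. ennreal (1 / lam) * F (fst p, snd p, of_int k / lam)
                      \<partial>count_space (UNIV :: int set)) \<partial>lborel)"

definition conv :: "real \<Rightarrow> (real \<times> real \<times> real \<Rightarrow> ennreal) \<Rightarrow> (real \<times> real \<times> real \<Rightarrow> ennreal)
                    \<Rightarrow> real \<times> real \<times> real \<Rightarrow> ennreal" where
  "conv lam F G x = (case x of (\<tau>, \<xi>, q) \<Rightarrow>
      lint lam (\<lambda>(\<tau>', \<xi>', q'). F (\<tau> - \<tau>', \<xi> - \<xi>', q - q') * G (\<tau>', \<xi>', q')))"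

definition L2sq :: "real \<Rightarrow> (real \<times> real \<times> real \<Rightarrow> complex) \<Rightarrow> ennreal" where
  "L2sq lam f = lint lam (\<lambda>x. ennreal (norm (f x) ^ 2))"

text \<open>L^2 norm, for functions with finite L2sq.\<close>
definition L2norm :: "real \<Rightarrow> (real \<times> real \<times> real \<Rightarrow> complex) \<Rightarrow> real" where
  "L2norm lam f = sqrt (enn2real (L2sq lam f))"

definition qmeas :: "real \<Rightarrow> real set \<Rightarrow> ennreal" where
  "qmeas lam I = ennreal (1 / lam) * emeasure (count_space (UNIV :: int set)) {k. of_int k / lam \<in> I}"

definition esqrt :: "ennreal \<Rightarrow> ennreal" where
  "esqrt x = (if x = \<infinity> then \<infinity> else ennreal (sqrt (enn2real x)))"

end

theory Submission
  imports Defs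
begin


type_synonym pt = "(real \<times> real) \<times> int"

definition Y :: "pt measure" where
  "Y = (lborel :: (real\<times>real) measure) \<Otimes>\<^sub>M count_space UNIV"

lemma sf_Y: "sigma_finite_measure Y"
  unfolding Y_def
  by (intro sigma_finite_pair_measure sigma_finite_lborel sigma_finite_measure_count_space)

interpretation Yp: pair_sigma_finite "lborel :: (real\<times>real) measure" "count_space (UNIV::int set)"
  by (intro pair_sigma_finite.intro sigma_finite_lborel sigma_finite_measure_count_space)

interpretation YY: pair_sigma_finite Y Y
  by (intro pair_sigma_finite.intro sf_Y)

interpretation RY: pair_sigma_finite "lborel :: real measure" Y
  by (intro pair_sigma_finite.intro sf_Y sigma_finite_lborel)

lemma space_Y[simp]: "space Y = UNIV" by (simp add: Y_def space_pair_measure)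

definition slm :: "(pt \<Rightarrow> ennreal) \<Rightarrow> bool" where
  "slm u \<longleftrightarrow> (\<forall>k. (\<lambda>a. u (a,k)) \<in> borel_measurable borel)"

lemma slm_meas: assumes "slm u" shows "u \<in> borel_measurable Y"
proof -
  have 1: "(\<lambda>y. u (fst y, k)) \<in> borel_measurable Y" for k
    unfolding Y_def
    by (rule measurable_compose[OF measurable_fst]) (use assms in \<open>simp add: slm_def\<close>)
  have 2: "snd \<in> measurable Y (count_space UNIV)" unfolding Y_def by simp
  have "(\<lambda>y. (\<lambda>k y. u (fst y, k)) (snd y) y) \<in> borel_measurable Y"
    by (rule measurable_compose_countable[OF 1 2])
  then show ?thesis by simp
qed

lemma YY_meas:
  assumes "\<And>k j. (\<lambda>(a,b). G ((a,k),(b,j))) \<in> borel_measurable (borel \<Otimes>\<^sub>M borel)"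
  shows "G \<in> borel_measurable (Y \<Otimes>\<^sub>M Y)"
proof -
  have p: "(\<lambda>z::pt\<times>pt. (fst (fst z), fst (snd z))) \<in> measurable (Y \<Otimes>\<^sub>M Y) (borel \<Otimes>\<^sub>M borel)"
    unfolding Y_def by (intro measurable_Pair) (auto intro: measurable_compose[OF measurable_fst] measurable_compose[OF measurable_snd])
  have 1: "(\<lambda>z. G ((fst (fst z),k),(fst (snd z),j))) \<in> borel_measurable (Y \<Otimes>\<^sub>M Y)" for k j
    using measurable_compose[OF p assms[of k j]] by simp
  have g1: "(\<lambda>z::pt\<times>pt. snd (fst z)) \<in> measurable (Y \<Otimes>\<^sub>M Y) (count_space UNIV)"
    unfolding Y_def by (auto intro: measurable_compose[OF measurable_fst])
  have g2: "(\<lambda>z::pt\<times>pt. snd (snd z)) \<in> measurable (Y \<Otimes>\<^sub>M Y) (count_space UNIV)"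
    unfolding Y_def by (auto intro: measurable_compose[OF measurable_snd])
  have 2: "(\<lambda>z. G ((fst (fst z),k),(fst (snd z),snd (snd z)))) \<in> borel_measurable (Y \<Otimes>\<^sub>M Y)" for k
    using measurable_compose_countable[where f="\<lambda>j z. G ((fst (fst z),k),(fst (snd z),j))", OF 1 g2] by simp
  have "(\<lambda>z. G ((fst (fst z),snd (fst z)),(fst (snd z),snd (snd z)))) \<in> borel_measurable (Y \<Otimes>\<^sub>M Y)"
    using measurable_compose_countable[where f="\<lambda>k z. G ((fst (fst z),k),(fst (snd z),snd (snd z)))", OF 2 g1] by simp
  then show ?thesis by simp
qed

definition II :: "(pt \<Rightarrow> ennreal) \<Rightarrow> ennreal" where
  "II F = (\<integral>\<^sup>+y. F y \<partial>Y)"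

definition sub :: "pt \<Rightarrow> pt \<Rightarrow> pt" where
  "sub y x = (fst y - fst x, snd y - snd x)"

lemma II_iter: "F \<in> borel_measurable Y \<Longrightarrow>
  II F = (\<integral>\<^sup>+a. (\<integral>\<^sup>+k. F (a,k) \<partial>count_space UNIV) \<partial>lborel)"
  unfolding II_def Y_def by (rule Yp.M2.nn_integral_fst[symmetric]) simp

lemma II_iter2: "F \<in> borel_measurable Y \<Longrightarrow>
  II F = (\<integral>\<^sup>+k. (\<integral>\<^sup>+a. F (a,k) \<partial>lborel) \<partial>count_space UNIV)"
  unfolding II_def Y_def by (rule Yp.nn_integral_snd[symmetric]) simp

lemma slm_comp: "slm u \<Longrightarrow> f \<in> measurable M borel \<Longrightarrow> (\<lambda>x. u (f x, k)) \<in> borel_measurable M"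
  unfolding slm_def by (rule measurable_compose[of f M borel]) auto

lemma lborel_refl:
  fixes f :: "real\<times>real \<Rightarrow> ennreal"
  assumes [measurable]: "f \<in> borel_measurable borel"
  shows "(\<integral>\<^sup>+x. f (t - x) \<partial>lborel) = (\<integral>\<^sup>+x. f x \<partial>lborel)"
proof -
  have "(\<integral>\<^sup>+x. f x \<partial>lborel) = (\<integral>\<^sup>+x. f x \<partial>density (distr lborel borel (\<lambda>x. t + (-1) *\<^sub>R x)) (\<lambda>_. \<bar>-1::real\<bar>^DIM(real\<times>real)))"
    by (subst lborel_affine[of "-1" t, symmetric]) simp_all
  also have "\<dots> = (\<integral>\<^sup>+x. f (t - x) \<partial>lborel)"
    by (simp add: nn_integral_density nn_integral_distr)
  finally show ?thesis ..
qed

lemma lborel_shift: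
  fixes f :: "real\<times>real \<Rightarrow> ennreal"
  assumes [measurable]: "f \<in> borel_measurable borel"
  shows "(\<integral>\<^sup>+x. f (x - t) \<partial>lborel) = (\<integral>\<^sup>+x. f x \<partial>lborel)"
proof -
  have "(\<integral>\<^sup>+x. f x \<partial>lborel) = (\<integral>\<^sup>+x. f x \<partial>distr lborel borel ((+) (-t)))"
    by (simp add: lborel_distr_plus)
  also have "\<dots> = (\<integral>\<^sup>+x. f (x - t) \<partial>lborel)"
    by (simp add: nn_integral_distr)
  finally show ?thesis ..
qed

lemma slm_sub1: assumes "slm F" shows "slm (\<lambda>y. F (sub z y))"
  unfolding slm_def
proof
  fix k
  have c: "(\<lambda>a::real\<times>real. fst z - a) \<in> borel_measurable borel"
    by (intro borel_measurable_continuous_onI continuous_intros)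
  have "(\<lambda>a. F (fst z - a, snd z - k)) \<in> borel_measurable borel"
    by (rule measurable_compose[OF c, of "\<lambda>a. F (a, snd z - k)", simplified]) (use assms in \<open>simp add: slm_def\<close>)
  then show "(\<lambda>a. F (sub z (a, k))) \<in> borel_measurable borel" by (simp add: sub_def)
qed

lemma slm_sub2: assumes "slm F" shows "slm (\<lambda>y. F (sub y z))"
  unfolding slm_def
proof
  fix k
  have c: "(\<lambda>a::real\<times>real. a - fst z) \<in> borel_measurable borel"
    by (intro borel_measurable_continuous_onI continuous_intros)
  have "(\<lambda>a. F (a - fst z, k - snd z)) \<in> borel_measurable borel"
    by (rule measurable_compose[OF c, of "\<lambda>a. F (a, k - snd z)", simplified]) (use assms in \<open>simp add: slm_def\<close>)
  then show "(\<lambda>a. F (sub (a, k) z)) \<in> borel_measurable borel" by (simp add: sub_def)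
qed

lemma II_sub1: assumes "slm F" shows "II (\<lambda>y. F (sub z y)) = II F"
proof -
  have m: "(\<lambda>a. F (a,k)) \<in> borel_measurable borel" for k using assms by (simp add: slm_def)
  have "II (\<lambda>y. F (sub z y)) = (\<integral>\<^sup>+k. (\<integral>\<^sup>+a. F (fst z - a, snd z - k) \<partial>lborel) \<partial>count_space UNIV)"
    by (subst II_iter2) (auto simp: sub_def intro!: slm_meas slm_sub1[OF assms, unfolded sub_def])
  also have "\<dots> = (\<integral>\<^sup>+k. (\<integral>\<^sup>+a. F (a, snd z - k) \<partial>lborel) \<partial>count_space UNIV)"
    by (simp add: lborel_refl[OF m])
  also have "\<dots> = (\<integral>\<^sup>+k. (\<integral>\<^sup>+a. F (a, k) \<partial>lborel) \<partial>count_space UNIV)"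
    by (rule nn_integral_bij_count_space[where f="\<lambda>k. (\<integral>\<^sup>+a. F (a, k) \<partial>lborel)"])
       (rule bij_betwI[where g="\<lambda>k. snd z - k"], auto)
  also have "\<dots> = II F" by (rule II_iter2[symmetric]) (rule slm_meas[OF assms])
  finally show ?thesis .
qed

lemma II_sub2: assumes "slm F" shows "II (\<lambda>y. F (sub y z)) = II F"
proof -
  have m: "(\<lambda>a. F (a,k)) \<in> borel_measurable borel" for k using assms by (simp add: slm_def)
  have "II (\<lambda>y. F (sub y z)) = (\<integral>\<^sup>+k. (\<integral>\<^sup>+a. F (a - fst z, k - snd z) \<partial>lborel) \<partial>count_space UNIV)"
    by (subst II_iter2) (auto simp: sub_def intro!: slm_meas slm_sub2[OF assms, unfolded sub_def])
  also have "\<dots> = (\<integral>\<^sup>+k. (\<integral>\<^sup>+a. F (a, k - snd z) \<partial>lborel) \<partial>count_space UNIV)"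
    by (simp add: lborel_shift[OF m])
  also have "\<dots> = (\<integral>\<^sup>+k. (\<integral>\<^sup>+a. F (a, k) \<partial>lborel) \<partial>count_space UNIV)"
    by (rule nn_integral_bij_count_space[where f="\<lambda>k. (\<integral>\<^sup>+a. F (a, k) \<partial>lborel)"])
       (rule bij_betwI[where g="\<lambda>k. k + snd z"], auto)
  also have "\<dots> = II F" by (rule II_iter2[symmetric]) (rule slm_meas[OF assms])
  finally show ?thesis .
qed




lemma slm_mult: assumes "slm u" "slm v" shows "slm (\<lambda>y. u y * v y)"
  unfolding slm_def
proof
  fix k
  have [measurable]: "(\<lambda>a. u (a,k)) \<in> borel_measurable borel" "(\<lambda>a. v (a,k)) \<in> borel_measurable borel"
    using assms by (auto simp: slm_def)
  show "(\<lambda>a. u (a,k) * v (a,k)) \<in> borel_measurable borel" by measurable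
qed

lemma slm_power: assumes "slm u" shows "slm (\<lambda>y. u y ^ n)"
  unfolding slm_def
proof
  fix k
  have [measurable]: "(\<lambda>a. u (a,k)) \<in> borel_measurable borel"
    using assms by (auto simp: slm_def)
  show "(\<lambda>a. u (a,k) ^ n) \<in> borel_measurable borel" by measurable
qed

lemma ind_sq[simp]: "(indicator A x :: ennreal)^2 = indicator A x"
  by (simp split: split_indicator)

lemma slm_const: "slm (\<lambda>y. c)"
  unfolding slm_def by auto

lemma slm_ind_nz: "slm u \<Longrightarrow> slm v \<Longrightarrow> slm (\<lambda>y. indicator {y. u y \<noteq> 0 \<and> v y \<noteq> 0} y :: ennreal)"
proof -
  assume a: "slm u" "slm v"
  show ?thesis unfolding slm_def
  proof
    fix k
    have [measurable]: "(\<lambda>a. u (a,k)) \<in> borel_measurable borel" "(\<lambda>a. v (a,k)) \<in> borel_measurable borel"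
      using a by (auto simp: slm_def)
    have "(\<lambda>a. if u (a,k) \<noteq> 0 \<and> v (a,k) \<noteq> 0 then 1 else 0 :: ennreal) \<in> borel_measurable borel"
      by measurable
    then show "(\<lambda>a. indicator {y. u y \<noteq> 0 \<and> v y \<noteq> 0} (a, k) :: ennreal) \<in> borel_measurable borel"
      by (simp add: indicator_def)
  qed
qed

lemma conv_meas:
  assumes "slm u" "slm v"
  shows "(\<lambda>(y3,y2). u (sub y3 y2) * v y2) \<in> borel_measurable (Y \<Otimes>\<^sub>M Y)"
proof (rule YY_meas)
  fix k j
  have d: "(\<lambda>x::(real\<times>real)\<times>(real\<times>real). fst x - snd x) \<in> borel_measurable (borel \<Otimes>\<^sub>M borel)"
    by (intro borel_measurable_diff measurable_fst measurable_snd)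
  have 1: "(\<lambda>x::(real\<times>real)\<times>(real\<times>real). u (fst x - snd x, k - j)) \<in> borel_measurable (borel \<Otimes>\<^sub>M borel)"
    by (rule measurable_compose[OF d, of "\<lambda>a. u (a, k-j)"]) (use assms in \<open>simp add: slm_def\<close>)
  have 2: "(\<lambda>x::(real\<times>real)\<times>(real\<times>real). v (snd x, j)) \<in> borel_measurable (borel \<Otimes>\<^sub>M borel)"
    by (rule measurable_compose[OF measurable_snd, of "\<lambda>a. v (a, j)"]) (use assms in \<open>simp add: slm_def\<close>)
  have "(\<lambda>x::(real\<times>real)\<times>(real\<times>real). u (fst x - snd x, k - j) * v (snd x, j)) \<in> borel_measurable (borel \<Otimes>\<^sub>M borel)"
    using 1 2 by measurable
  then show "(\<lambda>(a, b). (\<lambda>(y3, y2). u (sub y3 y2) * v y2) ((a, k), b, j)) \<in> borel_measurable (borel \<Otimes>\<^sub>M borel)"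
    by (simp add: sub_def case_prod_beta)
qed

lemma int2_meas:
  assumes "G \<in> borel_measurable (Y \<Otimes>\<^sub>M Y)"
  shows "(\<lambda>x. II (\<lambda>y. G (x,y))) \<in> borel_measurable Y"
  unfolding II_def using assms by (intro YY.M1.borel_measurable_nn_integral) simp

definition T :: "(pt\<Rightarrow>ennreal) \<Rightarrow> (pt\<Rightarrow>ennreal) \<Rightarrow> (pt\<Rightarrow>ennreal) \<Rightarrow> ennreal" where
  "T u v w = II (\<lambda>y3. II (\<lambda>y2. u (sub y3 y2) * v y2) * w y3)"

lemma CS_II: "f \<in> borel_measurable Y \<Longrightarrow> g \<in> borel_measurable Y \<Longrightarrow>
   (II (\<lambda>x. f x * g x))^2 \<le> II (\<lambda>x. f x ^ 2) * II (\<lambda>x. g x ^ 2)"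
  unfolding II_def by (rule Cauchy_Schwarz_nn_integral)

lemma fiber_bound:
  assumes su: "slm u" and sv: "slm v" and sw: "slm w"
  and E: "\<And>y3. II (\<lambda>y2. indicator {y2. u (sub y3 y2) \<noteq> 0 \<and> v y2 \<noteq> 0} y2) \<le> E"
  shows "(T u v w)^2 \<le> E * II (\<lambda>y. u y^2) * II (\<lambda>y. v y^2) * II (\<lambda>y. w y^2)"
proof -
  define P where "P y3 = II (\<lambda>y2. u (sub y3 y2) * v y2)" for y3
  define G where "G y3 = II (\<lambda>y2. u (sub y3 y2)^2 * v y2^2)" for y3
  have mP: "P \<in> borel_measurable Y"
    unfolding P_def using int2_meas[OF conv_meas[OF su sv]] by simp
  have mG: "G \<in> borel_measurable Y"
    unfolding G_def using int2_meas[OF conv_meas[OF slm_power[OF su] slm_power[OF sv]]] by simp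
  have P2: "(P y3)^2 \<le> G y3 * E" for y3
  proof -
    let ?S = "{y2. u (sub y3 y2) \<noteq> 0 \<and> v y2 \<noteq> 0}"
    have "P y3 = II (\<lambda>y2. (u (sub y3 y2) * v y2) * indicator ?S y2)"
      unfolding P_def II_def by (intro nn_integral_cong) (auto simp: indicator_def)
    also have "(\<dots>)^2 \<le> II (\<lambda>y2. (u (sub y3 y2) * v y2)^2) * II (\<lambda>y2. (indicator ?S y2 :: ennreal)^2)"
      by (intro CS_II slm_meas slm_mult slm_sub1 su sv slm_ind_nz[of "\<lambda>y2. u (sub y3 y2)" v, simplified])
    also have "II (\<lambda>y2. (indicator ?S y2 :: ennreal)^2) = II (\<lambda>y2. indicator ?S y2)"
      by simp
    also have "II (\<lambda>y2. (u (sub y3 y2) * v y2)^2) = G y3"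
      unfolding G_def by (simp add: power_mult_distrib)
    finally show ?thesis using E[of y3] by (meson mult_left_mono order_trans zero_le)
  qed
  have "(T u v w)^2 = (II (\<lambda>y3. P y3 * w y3))^2" unfolding T_def P_def ..
  also have "\<dots> \<le> II (\<lambda>y3. P y3 ^2) * II (\<lambda>y. w y^2)"
    by (intro CS_II mP slm_meas sw)
  also have "II (\<lambda>y3. P y3 ^2) \<le> II (\<lambda>y3. G y3 * E)"
    unfolding II_def by (intro nn_integral_mono P2)
  also have "II (\<lambda>y3. G y3 * E) = II G * E"
    unfolding II_def using mG by (simp add: nn_integral_multc)
  also have "II G = II (\<lambda>y. u y^2) * II (\<lambda>y. v y^2)"
  proof -
    have m: "(\<lambda>(y3,y2). u (sub y3 y2)^2 * v y2^2) \<in> borel_measurable (Y \<Otimes>\<^sub>M Y)"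
      using conv_meas[OF slm_power[OF su] slm_power[OF sv]] by simp
    have "II G = (\<integral>\<^sup>+y3. (\<integral>\<^sup>+y2. u (sub y3 y2)^2 * v y2^2 \<partial>Y) \<partial>Y)"
      unfolding G_def II_def ..
    also have "\<dots> = (\<integral>\<^sup>+y2. (\<integral>\<^sup>+y3. u (sub y3 y2)^2 * v y2^2 \<partial>Y) \<partial>Y)"
      by (rule YY.Fubini'[symmetric]) (use m in simp)
    also have "\<dots> = (\<integral>\<^sup>+y2. II (\<lambda>y3. u (sub y3 y2)^2) * v y2^2 \<partial>Y)"
      unfolding II_def
      by (intro nn_integral_cong nn_integral_multc slm_meas slm_sub2 slm_power su)
    also have "\<dots> = (\<integral>\<^sup>+y2. II (\<lambda>y. u y^2) * v y2^2 \<partial>Y)"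
      by (simp add: II_sub2[OF slm_power[OF su]])
    also have "\<dots> = II (\<lambda>y. u y^2) * II (\<lambda>y. v y^2)"
      unfolding II_def by (intro nn_integral_cmult slm_meas slm_power sv)
    finally show ?thesis .
  qed
  finally show ?thesis
    by (smt (verit) mult.assoc mult.commute mult_right_mono zero_le)
qed




definition rf :: "(pt \<Rightarrow> ennreal) \<Rightarrow> pt \<Rightarrow> ennreal" where
  "rf u y = u (sub ((0,0),0) y)"

lemma slm_rf: "slm u \<Longrightarrow> slm (rf u)"
  unfolding rf_def by (rule slm_sub1)

lemma II_rf_sq: "slm u \<Longrightarrow> II (\<lambda>y. rf u y ^ 2) = II (\<lambda>y. u y ^ 2)"
  unfolding rf_def using II_sub1[OF slm_power[of u 2]] by simp

lemma sub_sub[simp]: "sub y (sub y x) = x"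
  by (simp add: sub_def)

lemma T_swap: assumes "slm u" "slm v" shows "T u v w = T v u w"
proof -
  have "II (\<lambda>y2. v (sub y3 y2) * u y2) = II (\<lambda>y2. u (sub y3 y2) * v y2)" for y3
  proof -
    have "II (\<lambda>y2. u (sub y3 y2) * v y2) = II (\<lambda>y2. (\<lambda>y. u (sub y3 y) * v y) (sub y3 y2))"
      by (rule II_sub1[symmetric]) (intro slm_mult slm_sub1 assms)
    then show ?thesis by (simp add: mult.commute)
  qed
  then show ?thesis unfolding T_def by simp
qed

lemma T_rot: assumes su: "slm u" and sv: "slm v" and sw: "slm w"
  shows "T u v w = T (rf u) w v"
proof -
  have m: "(\<lambda>(y3,y2). u (sub y3 y2) * v y2 * w y3) \<in> borel_measurable (Y \<Otimes>\<^sub>M Y)"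
  proof -
    have 1: "(\<lambda>(y3,y2). u (sub y3 y2) * v y2) \<in> borel_measurable (Y \<Otimes>\<^sub>M Y)"
      by (rule conv_meas[OF su sv])
    have 2: "(\<lambda>z::pt\<times>pt. w (fst z)) \<in> borel_measurable (Y \<Otimes>\<^sub>M Y)"
      by (rule measurable_compose[OF measurable_fst slm_meas[OF sw]])
    have "(\<lambda>z. (\<lambda>(y3,y2). u (sub y3 y2) * v y2) z * w (fst z)) \<in> borel_measurable (Y \<Otimes>\<^sub>M Y)"
      using 1 2 by measurable
    then show ?thesis by (simp add: case_prod_beta)
  qed
  have "T u v w = (\<integral>\<^sup>+y3. (\<integral>\<^sup>+y2. u (sub y3 y2) * v y2 * w y3 \<partial>Y) \<partial>Y)"
    unfolding T_def II_def
    by (intro nn_integral_cong nn_integral_multc[symmetric] slm_meas slm_mult slm_sub1 su sv)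
  also have "\<dots> = (\<integral>\<^sup>+y2. (\<integral>\<^sup>+y3. u (sub y3 y2) * v y2 * w y3 \<partial>Y) \<partial>Y)"
    by (rule YY.Fubini'[symmetric]) (use m in simp)
  also have "\<dots> = (\<integral>\<^sup>+y2. (\<integral>\<^sup>+y3. rf u (sub y2 y3) * w y3 \<partial>Y) * v y2 \<partial>Y)"
  proof (intro nn_integral_cong)
    fix y2
    have e: "rf u (sub y2 y3) = u (sub y3 y2)" for y3
      unfolding rf_def by (rule arg_cong[where f=u]) (simp add: sub_def prod_eq_iff)
    show "(\<integral>\<^sup>+y3. u (sub y3 y2) * v y2 * w y3 \<partial>Y) = (\<integral>\<^sup>+y3. rf u (sub y2 y3) * w y3 \<partial>Y) * v y2"
      unfolding e
      by (subst nn_integral_multc[symmetric]) (auto intro!: nn_integral_cong slm_meas slm_mult slm_sub2 su sw simp: mult_ac)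
  qed
  also have "\<dots> = T (rf u) w v" unfolding T_def II_def ..
  finally show ?thesis .
qed




lemma esqrt_sq[simp]: "(esqrt x)^2 = x"
  by (cases x) (auto simp: esqrt_def ennreal_power)

lemma esqrt_sq'[simp]: "esqrt (x^2) = x"
proof (cases x)
  case (real r)
  then show ?thesis
    by (auto simp: esqrt_def ennreal_power)
next
  case top
  then show ?thesis by (simp add: esqrt_def)
qed

lemma esqrt_mono: "x \<le> y \<Longrightarrow> esqrt x \<le> esqrt y"
  by (cases x; cases y) (auto simp: esqrt_def ennreal_leI real_sqrt_le_iff top_unique)

lemma esqrt_le: "x^2 \<le> y \<Longrightarrow> x \<le> esqrt y"
  using esqrt_mono[of "x^2" y] by simp

lemma esqrt_mult: "esqrt (x*y) = esqrt x * esqrt y"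
proof -
  have "esqrt (x*y) = esqrt ((esqrt x * esqrt y)^2)" by (simp add: power_mult_distrib)
  then show ?thesis by simp
qed

lemma esqrt_meas[measurable]: "esqrt \<in> borel_measurable borel"
proof -
  have "(\<lambda>x::ennreal. if x = \<infinity> then \<infinity> else ennreal (sqrt (enn2real x))) \<in> borel_measurable borel"
    by measurable
  then show ?thesis by (simp add: esqrt_def[abs_def])
qed

lemma CS_sqrt:
  assumes "f \<in> borel_measurable M" "g \<in> borel_measurable M"
  shows "(\<integral>\<^sup>+x. f x * g x \<partial>M) \<le> esqrt (\<integral>\<^sup>+x. f x ^ 2 \<partial>M) * esqrt (\<integral>\<^sup>+x. g x ^ 2 \<partial>M)"
  unfolding esqrt_mult[symmetric] by (rule esqrt_le, rule Cauchy_Schwarz_nn_integral[OF assms])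

lemma slm_cont: "slm u \<Longrightarrow> continuous_on UNIV f \<Longrightarrow> (\<lambda>x. u (f x, k)) \<in> borel_measurable borel"
  unfolding slm_def by (rule measurable_compose[OF borel_measurable_continuous_onI]) auto

definition xi :: "pt \<Rightarrow> real" where "xi y = snd (fst y)"

lemma fstY: "fst \<in> measurable Y borel"
  unfolding Y_def using measurable_fst[of "lborel::(real\<times>real) measure" "count_space UNIV"] by simp

lemma LY_meas:
  assumes "\<And>k. (\<lambda>x::real\<times>(real\<times>real). G (fst x, (snd x, k))) \<in> borel_measurable borel"
  shows "G \<in> borel_measurable ((lborel :: real measure) \<Otimes>\<^sub>M Y)"
proof -
  have p0: "(\<lambda>z::real\<times>pt. (fst z, fst (snd z))) \<in> measurable (lborel \<Otimes>\<^sub>M Y) (borel \<Otimes>\<^sub>M borel)"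
    by (intro measurable_Pair measurable_compose[OF measurable_snd fstY])
      (use measurable_fst[of "lborel::real measure" Y] in simp)
  then have p: "(\<lambda>z::real\<times>pt. (fst z, fst (snd z))) \<in> measurable (lborel \<Otimes>\<^sub>M Y) borel"
    by (simp only: borel_prod)
  have 1: "(\<lambda>z. G (fst z, (fst (snd z), k))) \<in> borel_measurable (lborel \<Otimes>\<^sub>M Y)" for k
    using measurable_compose[OF p assms[of k]] by simp
  have g: "(\<lambda>z::real\<times>pt. snd (snd z)) \<in> measurable (lborel \<Otimes>\<^sub>M Y) (count_space UNIV)"
    unfolding Y_def by (auto intro: measurable_compose[OF measurable_snd])
  have "(\<lambda>z. G (fst z, (fst (snd z), snd (snd z)))) \<in> borel_measurable (lborel \<Otimes>\<^sub>M Y)"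
    using measurable_compose_countable[where f="\<lambda>k z. G (fst z, (fst (snd z), k))", OF 1 g] by simp
  then show ?thesis by simp
qed

lemma LYY_meas:
  assumes "\<And>k j. (\<lambda>x::real\<times>(real\<times>real)\<times>(real\<times>real). G ((fst x, (fst (snd x), k)), (snd (snd x), j))) \<in> borel_measurable borel"
  shows "G \<in> borel_measurable (((lborel :: real measure) \<Otimes>\<^sub>M Y) \<Otimes>\<^sub>M Y)"
proof -
  have p0: "(\<lambda>z::(real\<times>pt)\<times>pt. (fst (fst z), fst (snd (fst z)), fst (snd z))) \<in> measurable ((lborel \<Otimes>\<^sub>M Y) \<Otimes>\<^sub>M Y) (borel \<Otimes>\<^sub>M (borel \<Otimes>\<^sub>M borel))"
  proof (intro measurable_Pair)
    show "(\<lambda>z::(real\<times>pt)\<times>pt. fst (fst z)) \<in> measurable ((lborel \<Otimes>\<^sub>M Y) \<Otimes>\<^sub>M Y) borel"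
      by (rule measurable_compose[OF measurable_fst]) (use measurable_fst[of "lborel::real measure" Y] in simp)
    show "(\<lambda>z::(real\<times>pt)\<times>pt. fst (snd (fst z))) \<in> measurable ((lborel \<Otimes>\<^sub>M Y) \<Otimes>\<^sub>M Y) borel"
      by (rule measurable_compose[OF measurable_fst measurable_compose[OF measurable_snd fstY]])
    show "(\<lambda>z::(real\<times>pt)\<times>pt. fst (snd z)) \<in> measurable ((lborel \<Otimes>\<^sub>M Y) \<Otimes>\<^sub>M Y) borel"
      by (rule measurable_compose[OF measurable_snd fstY])
  qed
  then have p: "(\<lambda>z::(real\<times>pt)\<times>pt. (fst (fst z), fst (snd (fst z)), fst (snd z))) \<in> measurable ((lborel \<Otimes>\<^sub>M Y) \<Otimes>\<^sub>M Y) borel"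
    by (simp only: borel_prod)
  have 1: "(\<lambda>z. G ((fst (fst z), (fst (snd (fst z)), k)), (fst (snd z), j))) \<in> borel_measurable ((lborel \<Otimes>\<^sub>M Y) \<Otimes>\<^sub>M Y)" for k j
    using measurable_compose[OF p assms[of k j]] by simp
  have g1: "(\<lambda>z::(real\<times>pt)\<times>pt. snd (snd (fst z))) \<in> measurable ((lborel \<Otimes>\<^sub>M Y) \<Otimes>\<^sub>M Y) (count_space UNIV)"
    unfolding Y_def by (auto intro: measurable_compose[OF measurable_snd] measurable_compose[OF measurable_fst])
  have g2: "(\<lambda>z::(real\<times>pt)\<times>pt. snd (snd z)) \<in> measurable ((lborel \<Otimes>\<^sub>M Y) \<Otimes>\<^sub>M Y) (count_space UNIV)"
    unfolding Y_def by (auto intro: measurable_compose[OF measurable_snd])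
  have 2: "(\<lambda>z. G ((fst (fst z), (fst (snd (fst z)), k)), (fst (snd z), snd (snd z)))) \<in> borel_measurable ((lborel \<Otimes>\<^sub>M Y) \<Otimes>\<^sub>M Y)" for k
    using measurable_compose_countable[where f="\<lambda>j z. G ((fst (fst z), (fst (snd (fst z)), k)), (fst (snd z), j))", OF 1 g2] by simp
  have "(\<lambda>z. G ((fst (fst z), (fst (snd (fst z)), snd (snd (fst z)))), (fst (snd z), snd (snd z)))) \<in> borel_measurable ((lborel \<Otimes>\<^sub>M Y) \<Otimes>\<^sub>M Y)"
    using measurable_compose_countable[where f="\<lambda>k z. G ((fst (fst z), (fst (snd (fst z)), k)), (fst (snd z), snd (snd z)))", OF 2 g1] by simp
  then show ?thesis by simp
qed




lemma cont_meas: "continuous_on UNIV f \<Longrightarrow> f \<in> borel_measurable borel"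
  by (rule borel_measurable_continuous_onI)

lemma slm_ind_xi1: "slm (\<lambda>y. indicator {y. \<bar>xi y + c\<bar> \<le> r} y :: ennreal)"
  unfolding slm_def
proof
  fix k
  have [measurable]: "(\<lambda>a::real\<times>real. snd a) \<in> borel_measurable borel"
    by (intro cont_meas continuous_intros)
  have "(\<lambda>a::real\<times>real. if \<bar>snd a + c\<bar> \<le> r then 1 else 0 :: ennreal) \<in> borel_measurable borel"
    by measurable
  then show "(\<lambda>a. indicator {y. \<bar>xi y + c\<bar> \<le> r} (a, k) :: ennreal) \<in> borel_measurable borel"
    by (simp add: indicator_def xi_def)
qed

lemma slm_ind_xi2: "slm (\<lambda>y. indicator {y. \<bar>xi y - c\<bar> \<le> r} y :: ennreal)"
  unfolding slm_def
proof
  fix k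
  have [measurable]: "(\<lambda>a::real\<times>real. snd a) \<in> borel_measurable borel"
    by (intro cont_meas continuous_intros)
  have "(\<lambda>a::real\<times>real. if \<bar>snd a - c\<bar> \<le> r then 1 else 0 :: ennreal) \<in> borel_measurable borel"
    by measurable
  then show "(\<lambda>a. indicator {y. \<bar>xi y - c\<bar> \<le> r} (a, k) :: ennreal) \<in> borel_measurable borel"
    by (simp add: indicator_def xi_def)
qed

lemma int_ind1: assumes "r \<ge> 0" shows "(\<integral>\<^sup>+c. indicator {c. \<bar>a + c\<bar> \<le> r} c \<partial>lborel) = ennreal (2*r)"
proof -
  have "{c. \<bar>a + c\<bar> \<le> r} = {-a-r .. -a+r}" by auto
  then show ?thesis using assms by simp
qed

lemma int_ind2: assumes "r \<ge> 0" shows "(\<integral>\<^sup>+c. indicator {c. \<bar>a - c\<bar> \<le> r} c \<partial>lborel) = ennreal (2*r)"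
proof -
  have "{c. \<bar>a - c\<bar> \<le> r} = {a-r .. a+r}" by auto
  then show ?thesis using assms by simp
qed

lemma xi_sub: "xi (sub y x) = xi y - xi x"
  by (simp add: xi_def sub_def)

definition uc :: "real \<Rightarrow> real \<Rightarrow> (pt \<Rightarrow> ennreal) \<Rightarrow> real \<Rightarrow> pt \<Rightarrow> ennreal" where
  "uc r s u c y = u y * indicator {y. \<bar>xi y + s * c\<bar> \<le> r} y"

lemma meas_F:
  assumes su: "slm u" and sv: "slm v" and sw: "slm w"
  shows "(\<lambda>((c,y3),y2). uc r 1 u c (sub y3 y2) * uc L (-1) v c y2 * w y3) \<in> borel_measurable (((lborel :: real measure) \<Otimes>\<^sub>M Y) \<Otimes>\<^sub>M Y)"
proof (rule LYY_meas)
  fix k j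
  have [measurable]: "(\<lambda>x::real\<times>(real\<times>real)\<times>(real\<times>real). u (fst (snd x) - snd (snd x), k - j)) \<in> borel_measurable borel"
    by (rule slm_cont[OF su]) (intro continuous_intros)
  have [measurable]: "(\<lambda>x::real\<times>(real\<times>real)\<times>(real\<times>real). v (snd (snd x), j)) \<in> borel_measurable borel"
    by (rule slm_cont[OF sv]) (intro continuous_intros)
  have [measurable]: "(\<lambda>x::real\<times>(real\<times>real)\<times>(real\<times>real). w (fst (snd x), k)) \<in> borel_measurable borel"
    by (rule slm_cont[OF sw]) (intro continuous_intros)
  have [measurable]: "(\<lambda>x::real\<times>(real\<times>real)\<times>(real\<times>real). snd (fst (snd x) - snd (snd x)) + fst x) \<in> borel_measurable borel"
    by (intro cont_meas continuous_intros)
  have [measurable]: "(\<lambda>x::real\<times>(real\<times>real)\<times>(real\<times>real). snd (snd (snd x)) - fst x) \<in> borel_measurable borel"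
    by (intro cont_meas continuous_intros)
  have "(\<lambda>x::real\<times>(real\<times>real)\<times>(real\<times>real).
      (u (fst (snd x) - snd (snd x), k - j)
       * (if \<bar>snd (fst (snd x) - snd (snd x)) + fst x\<bar> \<le> r then 1 else 0))
      * (v (snd (snd x), j) * (if \<bar>snd (snd (snd x)) - fst x\<bar> \<le> L then 1 else 0))
      * w (fst (snd x), k)) \<in> borel_measurable borel"
    by measurable
  then show "(\<lambda>x. (\<lambda>((c,y3),y2). uc r 1 u c (sub y3 y2) * uc L (-1) v c y2 * w y3)
          ((fst x, fst (snd x), k), snd (snd x), j)) \<in> borel_measurable borel"
    by (simp add: uc_def sub_def xi_def indicator_def case_prod_beta of_bool_def)
qed




lemma slm_uc: "slm u \<Longrightarrow> slm (uc r s u c)"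
  unfolding uc_def[abs_def] by (intro slm_mult slm_ind_xi1)

lemma meas_U:
  assumes su: "slm u"
  shows "(\<lambda>(c,y). uc r s u c y ^ 2) \<in> borel_measurable ((lborel :: real measure) \<Otimes>\<^sub>M Y)"
proof (rule LY_meas)
  fix k
  have [measurable]: "(\<lambda>x::real\<times>(real\<times>real). u (snd x, k)) \<in> borel_measurable borel"
    by (rule slm_cont[OF su]) (intro continuous_intros)
  have [measurable]: "(\<lambda>x::real\<times>(real\<times>real). snd (snd x) + s * fst x) \<in> borel_measurable borel"
    by (intro cont_meas continuous_intros)
  have "(\<lambda>x::real\<times>(real\<times>real). (u (snd x, k) * (if \<bar>snd (snd x) + s * fst x\<bar> \<le> r then 1 else 0))^2) \<in> borel_measurable borel"
    by measurable
  then show "(\<lambda>x. (\<lambda>(c,y). uc r s u c y ^ 2) (fst x, snd x, k)) \<in> borel_measurable borel"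
    by (simp add: uc_def xi_def indicator_def case_prod_beta of_bool_def)
qed

lemma int_U:
  assumes su: "slm u" and r: "r \<ge> 0" and s: "\<bar>s\<bar> = 1"
  shows "(\<integral>\<^sup>+c. II (\<lambda>y. uc r s u c y ^ 2) \<partial>lborel) = ennreal (2*r) * II (\<lambda>y. u y ^ 2)"
proof -
  have "(\<integral>\<^sup>+c. II (\<lambda>y. uc r s u c y ^ 2) \<partial>lborel) = (\<integral>\<^sup>+y. (\<integral>\<^sup>+c. uc r s u c y ^ 2 \<partial>lborel) \<partial>Y)"
    unfolding II_def by (rule RY.Fubini'[symmetric]) (use meas_U[OF su] in simp)
  also have "\<dots> = (\<integral>\<^sup>+y. ennreal (2*r) * u y ^ 2 \<partial>Y)"
  proof (intro nn_integral_cong)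
    fix y
    have e: "uc r s u c y ^ 2 = u y ^ 2 * indicator {c. \<bar>xi y + s * c\<bar> \<le> r} c" for c
      by (simp add: uc_def power_mult_distrib indicator_def)
    have "(\<integral>\<^sup>+c. indicator {c. \<bar>xi y + s * c\<bar> \<le> r} c \<partial>lborel) = ennreal (2*r)"
    proof (cases "s = 1")
      case True then show ?thesis using int_ind1[OF r] by simp
    next
      case False
      then have "s = -1" using s by auto
      then show ?thesis using int_ind2[OF r] by simp
    qed
    then show "(\<integral>\<^sup>+c. uc r s u c y ^ 2 \<partial>lborel) = ennreal (2*r) * u y ^ 2"
      unfolding e by (subst nn_integral_cmult) (auto simp: mult.commute)
  qed
  also have "\<dots> = ennreal (2*r) * II (\<lambda>y. u y ^ 2)"
    unfolding II_def by (rule nn_integral_cmult) (intro slm_meas slm_power su)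
  finally show ?thesis .
qed




lemma loc_bound:
  assumes su: "slm u" and sv: "slm v" and sw: "slm w" and L: "L > 0"
  and wR: "\<And>y. w y \<noteq> 0 \<Longrightarrow> \<bar>xi y\<bar> \<le> L"
  and E: "\<And>c y3. II (\<lambda>y2. indicator {y2. u (sub y3 y2) \<noteq> 0 \<and> v y2 \<noteq> 0 \<and> \<bar>xi y2 - c\<bar> \<le> L} y2) \<le> E"
  shows "(T u v w)^2 \<le> 2 * E * II (\<lambda>y. u y^2) * II (\<lambda>y. v y^2) * II (\<lambda>y. w y^2)"
proof -
  define U where "U = II (\<lambda>y. u y^2)"
  define V where "V = II (\<lambda>y. v y^2)"
  define W where "W = II (\<lambda>y. w y^2)"
  let ?uc = "uc (2*L) 1 u" and ?vc = "uc L (-1) v"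
  define F where "F c y3 y2 = ?uc c (sub y3 y2) * ?vc c y2 * w y3" for c y3 y2
  have mF: "(\<lambda>((c,y3),y2). F c y3 y2) \<in> borel_measurable ((lborel \<Otimes>\<^sub>M Y) \<Otimes>\<^sub>M Y)"
    unfolding F_def by (rule meas_F[OF su sv sw])
  have mF1: "(\<lambda>(c,y2). F c y3 y2) \<in> borel_measurable (lborel \<Otimes>\<^sub>M Y)" for y3
  proof -
    have m: "(\<lambda>z::real\<times>pt. ((fst z, y3), snd z)) \<in> measurable (lborel \<Otimes>\<^sub>M Y) ((lborel \<Otimes>\<^sub>M Y) \<Otimes>\<^sub>M Y)"
      by (intro measurable_Pair measurable_fst measurable_snd measurable_const) simp
    show ?thesis using measurable_compose[OF m mF] by (simp add: case_prod_beta)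
  qed
  have mF2: "(\<lambda>(c,y3). II (\<lambda>y2. F c y3 y2)) \<in> borel_measurable (lborel \<Otimes>\<^sub>M Y)"
    unfolding II_def case_prod_beta
  proof (rule YY.M1.borel_measurable_nn_integral)
    have "(\<lambda>(x,y). F (fst x) (snd x) y) = (\<lambda>((c,y3),y2). F c y3 y2)" by (auto simp: fun_eq_iff)
    then show "(\<lambda>(x,y). F (fst x) (snd x) y) \<in> borel_measurable ((lborel \<Otimes>\<^sub>M Y) \<Otimes>\<^sub>M Y)"
      using mF by simp
  qed
  have pt: "(\<integral>\<^sup>+c. F c y3 y2 \<partial>lborel) = ennreal (2*L) * (u (sub y3 y2) * v y2 * w y3)" for y3 y2
  proof -
    have e: "F c y3 y2 = (u (sub y3 y2) * v y2 * w y3) * indicator {c. \<bar>xi y2 - c\<bar> \<le> L} c" for c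
    proof (cases "w y3 = 0")
      case True then show ?thesis by (simp add: F_def)
    next
      case False
      then have "\<bar>xi y3\<bar> \<le> L" by (rule wR)
      then have "\<bar>xi y2 - c\<bar> \<le> L \<Longrightarrow> \<bar>xi (sub y3 y2) + 1 * c\<bar> \<le> 2 * L"
        by (simp add: xi_sub abs_le_iff)
      then show ?thesis
        by (auto simp: F_def uc_def indicator_def abs_minus_commute mult_ac)
    qed
    have i: "emeasure lborel {c. \<bar>xi y2 - c\<bar> \<le> L} = ennreal (2*L)"
      using int_ind2[of L "xi y2"] L by simp
    show ?thesis unfolding e
      by (subst nn_integral_cmult) (auto simp: i mult_ac)
  qed
  have Tc: "T (?uc c) (?vc c) w \<le> esqrt (E * W) * (esqrt (II (\<lambda>y. ?uc c y^2)) * esqrt (II (\<lambda>y. ?vc c y^2)))" for c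
  proof -
    have fib: "II (\<lambda>y2. indicator {y2. ?uc c (sub y3 y2) \<noteq> 0 \<and> ?vc c y2 \<noteq> 0} y2) \<le> E" for y3
    proof -
      have "II (\<lambda>y2. indicator {y2. ?uc c (sub y3 y2) \<noteq> 0 \<and> ?vc c y2 \<noteq> 0} y2)
         \<le> II (\<lambda>y2. indicator {y2. u (sub y3 y2) \<noteq> 0 \<and> v y2 \<noteq> 0 \<and> \<bar>xi y2 - c\<bar> \<le> L} y2)"
        unfolding II_def by (intro nn_integral_mono) (auto simp: uc_def indicator_def)
      also have "\<dots> \<le> E" by (rule E)
      finally show ?thesis .
    qed
    have "(T (?uc c) (?vc c) w)^2 \<le> E * II (\<lambda>y. ?uc c y^2) * II (\<lambda>y. ?vc c y^2) * W"
      unfolding W_def by (rule fiber_bound[OF slm_uc[OF su] slm_uc[OF sv] sw fib])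
    then have "T (?uc c) (?vc c) w \<le> esqrt (E * II (\<lambda>y. ?uc c y^2) * II (\<lambda>y. ?vc c y^2) * W)"
      by (rule esqrt_le)
    then show ?thesis by (simp add: esqrt_mult mult_ac)
  qed
  have mUc: "(\<lambda>c. II (\<lambda>y. uc r s u' c y^2)) \<in> borel_measurable lborel" if "slm u'" for r s u'
    unfolding II_def
    by (rule YY.M1.borel_measurable_nn_integral) (use meas_U[OF that, of r s] in simp)
  have mP: "(\<lambda>y3. II (\<lambda>y2. u (sub y3 y2) * v y2)) \<in> borel_measurable Y"
    using int2_meas[OF conv_meas[OF su sv]] by simp
  have mPw: "(\<lambda>y3. II (\<lambda>y2. u (sub y3 y2) * v y2) * w y3) \<in> borel_measurable Y"
    using mP slm_meas[OF sw] by measurable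
  have "ennreal (2*L) * T u v w = (\<integral>\<^sup>+y3. ennreal (2*L) * (II (\<lambda>y2. u (sub y3 y2) * v y2) * w y3) \<partial>Y)"
    unfolding T_def II_def[of "\<lambda>y3. II (\<lambda>y2. u (sub y3 y2) * v y2) * w y3"]
    by (rule nn_integral_cmult[symmetric]) (rule mPw)
  also have "\<dots> = (\<integral>\<^sup>+y3. (\<integral>\<^sup>+y2. ennreal (2*L) * (u (sub y3 y2) * v y2 * w y3) \<partial>Y) \<partial>Y)"
  proof (intro nn_integral_cong)
    fix y3
    have "ennreal (2*L) * (II (\<lambda>y2. u (sub y3 y2) * v y2) * w y3) = II (\<lambda>y2. u (sub y3 y2) * v y2) * (ennreal (2*L) * w y3)"
      by (simp add: mult_ac)
    also have "\<dots> = (\<integral>\<^sup>+y2. u (sub y3 y2) * v y2 * (ennreal (2*L) * w y3) \<partial>Y)"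
      unfolding II_def by (rule nn_integral_multc[symmetric]) (intro slm_meas slm_mult slm_sub1 su sv)
    finally show "ennreal (2*L) * (II (\<lambda>y2. u (sub y3 y2) * v y2) * w y3) = (\<integral>\<^sup>+y2. ennreal (2*L) * (u (sub y3 y2) * v y2 * w y3) \<partial>Y)"
      by (simp add: mult_ac)
  qed
  also have "\<dots> = (\<integral>\<^sup>+y3. (\<integral>\<^sup>+y2. (\<integral>\<^sup>+c. F c y3 y2 \<partial>lborel) \<partial>Y) \<partial>Y)"
    by (simp add: pt)
  also have "\<dots> = (\<integral>\<^sup>+y3. (\<integral>\<^sup>+c. II (\<lambda>y2. F c y3 y2) \<partial>lborel) \<partial>Y)"
    unfolding II_def by (intro nn_integral_cong RY.Fubini') (use mF1 in simp)
  also have "\<dots> = (\<integral>\<^sup>+c. (\<integral>\<^sup>+y3. II (\<lambda>y2. F c y3 y2) \<partial>Y) \<partial>lborel)"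
    by (rule RY.Fubini') (use mF2 in simp)
  also have "\<dots> = (\<integral>\<^sup>+c. T (?uc c) (?vc c) w \<partial>lborel)"
  proof (intro nn_integral_cong)
    fix c
    have "II (\<lambda>y2. F c y3 y2) = II (\<lambda>y2. ?uc c (sub y3 y2) * ?vc c y2) * w y3" for y3
      unfolding II_def F_def
      by (rule nn_integral_multc) (intro slm_meas slm_mult slm_sub1 slm_uc su sv)
    then show "(\<integral>\<^sup>+y3. II (\<lambda>y2. F c y3 y2) \<partial>Y) = T (?uc c) (?vc c) w"
      unfolding T_def by (simp add: II_def)
  qed
  also have "\<dots> \<le> (\<integral>\<^sup>+c. esqrt (E * W) * (esqrt (II (\<lambda>y. ?uc c y^2)) * esqrt (II (\<lambda>y. ?vc c y^2))) \<partial>lborel)"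
    by (intro nn_integral_mono Tc)
  also have "\<dots> = esqrt (E * W) * (\<integral>\<^sup>+c. esqrt (II (\<lambda>y. ?uc c y^2)) * esqrt (II (\<lambda>y. ?vc c y^2)) \<partial>lborel)"
  proof (rule nn_integral_cmult)
    have [measurable]: "(\<lambda>c. esqrt (II (\<lambda>y. ?uc c y^2))) \<in> borel_measurable lborel"
      "(\<lambda>c. esqrt (II (\<lambda>y. ?vc c y^2))) \<in> borel_measurable lborel"
      by (rule measurable_compose[OF mUc[OF su] esqrt_meas], rule measurable_compose[OF mUc[OF sv] esqrt_meas])
    show "(\<lambda>c. esqrt (II (\<lambda>y. ?uc c y^2)) * esqrt (II (\<lambda>y. ?vc c y^2))) \<in> borel_measurable lborel"
      by measurable
  qed
  also have "(\<integral>\<^sup>+c. esqrt (II (\<lambda>y. ?uc c y^2)) * esqrt (II (\<lambda>y. ?vc c y^2)) \<partial>lborel)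
      \<le> esqrt (\<integral>\<^sup>+c. II (\<lambda>y. ?uc c y^2) \<partial>lborel) * esqrt (\<integral>\<^sup>+c. II (\<lambda>y. ?vc c y^2) \<partial>lborel)"
    using CS_sqrt[OF measurable_compose[OF mUc[OF su] esqrt_meas] measurable_compose[OF mUc[OF sv] esqrt_meas]] by simp
  also have "(\<integral>\<^sup>+c. II (\<lambda>y. ?uc c y^2) \<partial>lborel) = ennreal (2*(2*L)) * U"
    unfolding U_def by (rule int_U[OF su]) (use L in auto)
  also have "(\<integral>\<^sup>+c. II (\<lambda>y. ?vc c y^2) \<partial>lborel) = ennreal (2*L) * V"
    unfolding V_def by (rule int_U[OF sv]) (use L in auto)
  finally have H: "ennreal (2*L) * T u v w \<le> esqrt (E * W) * (esqrt (ennreal (2*(2*L)) * U) * esqrt (ennreal (2*L) * V))"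
    by (simp add: mult_left_mono)
  define a where "a = ennreal (2*L)"
  have a2: "ennreal (2*(2*L)) = 2 * a"
    unfolding a_def using L by (simp add: ennreal_mult)
  have H2: "a * T u v w \<le> esqrt (E * W) * (esqrt (2 * a * U) * esqrt (a * V))"
    using H unfolding a2 a_def[symmetric] .
  have "(a * T u v w)^2 \<le> (esqrt (E * W) * (esqrt (2 * a * U) * esqrt (a * V)))^2"
    by (rule power_mono[OF H2]) simp
  also have "\<dots> = (E * W) * ((2 * a * U) * (a * V))"
    by (simp only: power_mult_distrib esqrt_sq)
  also have "\<dots> = (a^2) * (2 * E * U * V * W)"
    by (simp add: power2_eq_square mult_ac)
  finally have "(a^2) * (T u v w)^2 \<le> (a^2) * (2 * E * U * V * W)"
    by (simp add: power_mult_distrib)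
  moreover have "a^2 \<noteq> 0" "a^2 \<noteq> top" unfolding a_def using L by (auto simp: ennreal_power)
  ultimately show ?thesis unfolding U_def V_def W_def
    using ennreal_mult_le_mult_iff by blast
qed




definition cnt :: "int set \<Rightarrow> ennreal" where
  "cnt N = emeasure (count_space UNIV) N"

lemma cnt_refl: "cnt {k. k0 - k \<in> N} = cnt N"
proof -
  have e: "{k. k0 - k \<in> N} = (\<lambda>k. k0 - k) ` N"
  proof
    show "{k. k0 - k \<in> N} \<subseteq> (\<lambda>k. k0 - k) ` N"
    proof
      fix x assume "x \<in> {k. k0 - k \<in> N}"
      then have "k0 - x \<in> N" by simp
      moreover have "x = k0 - (k0 - x)" by simp
      ultimately show "x \<in> (\<lambda>k. k0 - k) ` N" by (rule rev_image_eqI)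
    qed
  qed auto
  have i: "inj_on (\<lambda>k::int. k0 - k) X" for X by (auto simp: inj_on_def)
  show ?thesis unfolding cnt_def e
    by (simp add: emeasure_count_space finite_image_iff[OF i] card_image[OF i])
qed

lemma omega_meas[measurable]: "(\<lambda>x::real. omega x q) \<in> borel_measurable borel"
  unfolding omega_def by (intro borel_measurable_add borel_measurable_divide borel_measurable_power borel_measurable_const measurable_ident_sets) auto

lemma window_gen:
  assumes cf[measurable]: "\<And>k. (\<lambda>x. cf x k) \<in> borel_measurable borel"
  and K: "K \<ge> 0" and ab: "\<alpha> \<le> \<beta>"
  and imp: "\<And>t x k. S ((t,x),k) \<Longrightarrow> k \<in> A \<and> x \<in> {\<alpha>..\<beta>} \<and> \<bar>t - cf x k\<bar> \<le> K"
  shows "II (\<lambda>y. indicator {y. S y} y) \<le> ennreal (2*K) * ennreal (\<beta> - \<alpha>) * cnt A"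
proof -
  define G :: "pt \<Rightarrow> ennreal" where "G y = indicator A (snd y) * indicator {\<alpha>..\<beta>} (snd (fst y)) * indicator {t. \<bar>cf (snd (fst y)) (snd y) - t\<bar> \<le> K} (fst (fst y))" for y
  have le: "II (\<lambda>y. indicator {y. S y} y) \<le> II G"
    unfolding II_def G_def
  proof (intro nn_integral_mono)
    fix y :: pt
    obtain t x k where y: "y = ((t,x),k)" by (metis prod.collapse)
    show "(indicator {y. S y} y :: ennreal) \<le> indicator A (snd y) * indicator {\<alpha>..\<beta>} (snd (fst y)) * indicator {t. \<bar>cf (snd (fst y)) (snd y) - t\<bar> \<le> K} (fst (fst y))"
    proof (cases "S y")
      case True
      then have "k \<in> A \<and> x \<in> {\<alpha>..\<beta>} \<and> \<bar>t - cf x k\<bar> \<le> K" using imp y by blast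
      then show ?thesis by (auto simp: y indicator_def abs_minus_commute)
    qed (simp add: indicator_def)
  qed
  have mGk[measurable]: "(\<lambda>a. G (a,k)) \<in> borel_measurable borel" for k
  proof -
    have [measurable]: "(\<lambda>a::real\<times>real. snd a) \<in> borel_measurable borel" "(\<lambda>a::real\<times>real. fst a) \<in> borel_measurable borel"
      by (intro cont_meas continuous_intros)+
    have [measurable]: "(\<lambda>a::real\<times>real. cf (snd a) k) \<in> borel_measurable borel"
      by measurable
    have "(\<lambda>a::real\<times>real. indicator A k * (if snd a \<in> {\<alpha>..\<beta>} then 1 else 0) * (if \<bar>cf (snd a) k - fst a\<bar> \<le> K then 1 else 0) :: ennreal) \<in> borel_measurable borel"
      by measurable
    then show ?thesis by (simp add: G_def indicator_def of_bool_def)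
  qed
  have "II G = (\<integral>\<^sup>+k. (\<integral>\<^sup>+a. G (a,k) \<partial>lborel) \<partial>count_space UNIV)"
    by (rule II_iter2, rule slm_meas) (simp add: slm_def)
  also have "\<dots> = (\<integral>\<^sup>+k. indicator A k * (ennreal (2*K) * ennreal (\<beta> - \<alpha>)) \<partial>count_space UNIV)"
  proof (intro nn_integral_cong)
    fix k
    have "(\<integral>\<^sup>+a. G (a,k) \<partial>lborel) = (\<integral>\<^sup>+a. G (a,k) \<partial>(lborel \<Otimes>\<^sub>M lborel))"
      by (simp add: lborel_prod)
    also have "\<dots> = (\<integral>\<^sup>+x. (\<integral>\<^sup>+t. G ((t,x),k) \<partial>lborel) \<partial>lborel)"
      by (rule lborel_pair.nn_integral_snd[symmetric]) (use mGk[of k] in \<open>simp add: lborel_prod\<close>)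
    also have "\<dots> = (\<integral>\<^sup>+x. indicator A k * indicator {\<alpha>..\<beta>} x * ennreal (2*K) \<partial>lborel)"
    proof (intro nn_integral_cong)
      fix x
      have "(\<integral>\<^sup>+t. indicator {t. \<bar>cf x k - t\<bar> \<le> K} t \<partial>lborel) = ennreal (2*K)"
        by (rule int_ind2[OF K])
      moreover have "(\<integral>\<^sup>+t. G ((t,x),k) \<partial>lborel) = (\<integral>\<^sup>+t. (indicator A k * indicator {\<alpha>..\<beta>} x) * indicator {t. \<bar>cf x k - t\<bar> \<le> K} t \<partial>lborel)"
        by (simp add: G_def)
      moreover have "\<dots> = (indicator A k * indicator {\<alpha>..\<beta>} x) * (\<integral>\<^sup>+t. indicator {t. \<bar>cf x k - t\<bar> \<le> K} t \<partial>lborel)"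
        by (rule nn_integral_cmult) measurable
      ultimately show "(\<integral>\<^sup>+t. G ((t,x),k) \<partial>lborel) = indicator A k * indicator {\<alpha>..\<beta>} x * ennreal (2*K)"
        by simp
    qed
    also have "\<dots> = indicator A k * (ennreal (2*K) * ennreal (\<beta> - \<alpha>))"
    proof -
      have "(\<integral>\<^sup>+x. indicator A k * indicator {\<alpha>..\<beta>} x * ennreal (2*K) \<partial>lborel)
          = (\<integral>\<^sup>+x. (indicator A k * ennreal (2*K)) * indicator {\<alpha>..\<beta>} x \<partial>lborel)"
        by (simp add: mult_ac)
      also have "\<dots> = (indicator A k * ennreal (2*K)) * emeasure lborel {\<alpha>..\<beta>}"
        by (rule nn_integral_cmult_indicator) simp
      finally show ?thesis using ab by (simp add: mult_ac)
    qed
    finally show "(\<integral>\<^sup>+a. G (a,k) \<partial>lborel) = indicator A k * (ennreal (2*K) * ennreal (\<beta> - \<alpha>))" .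
  qed
  also have "\<dots> = ennreal (2*K) * ennreal (\<beta> - \<alpha>) * cnt A"
    by (subst nn_integral_multc) (auto simp: cnt_def mult_ac)
  finally show ?thesis using le by simp
qed




definition SP :: "real \<Rightarrow> (pt\<Rightarrow>ennreal) \<Rightarrow> real \<Rightarrow> real \<Rightarrow> int set \<Rightarrow> bool" where
  "SP lam u M K N \<longleftrightarrow> (\<forall>t x k. u ((t,x),k) \<noteq> 0 \<longrightarrow>
      \<bar>x\<bar> \<le> 3*M/2 \<and> \<bar>t - omega x (of_int k / lam)\<bar> \<le> K \<and> k \<in> N)"

lemma fiber_all:
  assumes u: "SP lam u Mu Ku Nu" and v: "SP lam v Mv Kv Nv" and Ku: "Ku \<ge> 0" and Kv: "Kv \<ge> 0"
    and ab: "\<alpha> \<le> \<beta>"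
  shows "II (\<lambda>y2. indicator {y2. u (sub y3 y2) \<noteq> 0 \<and> v y2 \<noteq> 0 \<and> xi y2 \<in> {\<alpha>..\<beta>}} y2)
     \<le> ennreal (2 * min Ku Kv) * ennreal (\<beta> - \<alpha>) * min (cnt Nu) (cnt Nv)"
proof -
  obtain t3 x3 k3 where y3: "y3 = ((t3,x3),k3)" by (metis prod.collapse)
  define S where "S y2 = (u (sub y3 y2) \<noteq> 0 \<and> v y2 \<noteq> 0 \<and> xi y2 \<in> {\<alpha>..\<beta>})" for y2
  have us: "u (sub y3 ((t,x),k)) = u ((t3 - t, x3 - x), k3 - k)" for t x k
    by (simp add: y3 sub_def)
  have cu[measurable]: "(\<lambda>x. t3 - omega (x3 - x) (of_int (k3 - k) / lam)) \<in> borel_measurable borel" for k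
  proof -
    have c: "(\<lambda>x::real. x3 - x) \<in> borel_measurable borel" by (intro cont_meas continuous_intros)
    have "(\<lambda>x. omega (x3 - x) (of_int (k3 - k) / lam)) \<in> borel_measurable borel"
      by (rule measurable_compose[OF c omega_meas])
    then show ?thesis by measurable
  qed
  have cv[measurable]: "(\<lambda>x. omega x (of_int k / lam)) \<in> borel_measurable borel" for k
    by (rule omega_meas)
  have e: "{y2. u (sub y3 y2) \<noteq> 0 \<and> v y2 \<noteq> 0 \<and> xi y2 \<in> {\<alpha>..\<beta>}} = {y2. S y2}" by (simp add: S_def)
  let ?I = "II (\<lambda>y2. indicator {y2. S y2} y2)"
  have 1: "?I \<le> ennreal (2 * Kv) * ennreal (\<beta> - \<alpha>) * cnt Nv"
    by (rule window_gen[where cf="\<lambda>x k. omega x (of_int k / lam)", OF cv Kv ab]) (use v in \<open>auto simp: S_def SP_def xi_def\<close>)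
  have 2: "?I \<le> ennreal (2 * Kv) * ennreal (\<beta> - \<alpha>) * cnt Nu"
  proof -
    have "?I \<le> ennreal (2 * Kv) * ennreal (\<beta> - \<alpha>) * cnt {k. k3 - k \<in> Nu}"
      by (rule window_gen[where cf="\<lambda>x k. omega x (of_int k / lam)", OF cv Kv ab]) (use u v in \<open>auto simp: S_def SP_def xi_def us\<close>)
    then show ?thesis by (simp add: cnt_refl)
  qed
  have 3: "?I \<le> ennreal (2 * Ku) * ennreal (\<beta> - \<alpha>) * cnt Nv"
    by (rule window_gen[where cf="\<lambda>x k. t3 - omega (x3 - x) (of_int (k3 - k) / lam)", OF cu Ku ab]) (use u v in \<open>fastforce simp: S_def SP_def xi_def us\<close>)
  have 4: "?I \<le> ennreal (2 * Ku) * ennreal (\<beta> - \<alpha>) * cnt Nu"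
  proof -
    have "?I \<le> ennreal (2 * Ku) * ennreal (\<beta> - \<alpha>) * cnt {k. k3 - k \<in> Nu}"
      by (rule window_gen[where cf="\<lambda>x k. t3 - omega (x3 - x) (of_int (k3 - k) / lam)", OF cu Ku ab]) (use u v in \<open>fastforce simp: S_def SP_def xi_def us\<close>)
    then show ?thesis by (simp add: cnt_refl)
  qed
  have "min Ku Kv = Ku \<or> min Ku Kv = Kv" by linarith
  moreover have "min (cnt Nu) (cnt Nv) = cnt Nu \<or> min (cnt Nu) (cnt Nv) = cnt Nv"
    by (simp add: min_def)
  ultimately show ?thesis unfolding e using 1 2 3 4 by auto
qed




lemma core:
  assumes su: "slm u" and sv: "slm v" and sw: "slm w"
    and u: "SP lam u Mu Ku Nu" and v: "SP lam v Mv Kv Nv" and w: "SP lam w Mw Kw Nw"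
    and Mu: "Mu > 0" and Mv: "Mv > 0" and Mw: "Mw > 0" and Ku: "Ku \<ge> 0" and Kv: "Kv \<ge> 0"
  shows "(T u v w)^2 \<le> 12 * ennreal (min Mu (min Mv Mw)) * ennreal (min Ku Kv) * min (cnt Nu) (cnt Nv)
           * II (\<lambda>y. u y^2) * II (\<lambda>y. v y^2) * II (\<lambda>y. w y^2)"
proof -
  define K where "K = min Ku Kv"
  define N where "N = min (cnt Nu) (cnt Nv)"
  define U where "U = II (\<lambda>y. u y^2)"
  define V where "V = II (\<lambda>y. v y^2)"
  define W where "W = II (\<lambda>y. w y^2)"
  have K0: "K \<ge> 0" using Ku Kv by (simp add: K_def)
  have fa: "\<alpha> \<le> \<beta> \<Longrightarrow> II (\<lambda>y2. indicator {y2. u (sub y3 y2) \<noteq> 0 \<and> v y2 \<noteq> 0 \<and> xi y2 \<in> {\<alpha>..\<beta>}} y2)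
     \<le> ennreal (2 * K) * ennreal (\<beta> - \<alpha>) * N" for \<alpha> \<beta> y3
    unfolding K_def N_def by (rule fiber_all[OF u v Ku Kv])
  have ar: "ennreal (2 * K) * ennreal (3 * M) * N = 6 * ennreal M * ennreal K * N" if "M > 0" for M
    using that K0 by (simp add: ennreal_mult' mult_ac)
  show ?thesis
  proof (cases "Mw \<le> Mu \<and> Mw \<le> Mv")
    case True
    define L where "L = 3 * Mw / 2"
    have L: "L > 0" using Mw by (simp add: L_def)
    have wR: "\<bar>xi y\<bar> \<le> L" if "w y \<noteq> 0" for y
    proof -
      obtain t x k where y: "y = ((t,x),k)" by (metis prod.collapse)
      have "\<bar>x\<bar> \<le> 3*Mw/2" using w that unfolding SP_def y by blast
      then show ?thesis by (simp add: y xi_def L_def)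
    qed
    have E: "II (\<lambda>y2. indicator {y2. u (sub y3 y2) \<noteq> 0 \<and> v y2 \<noteq> 0 \<and> \<bar>xi y2 - c\<bar> \<le> L} y2)
       \<le> ennreal (2 * K) * ennreal (3 * Mw) * N" for c y3
    proof -
      have "{y2. u (sub y3 y2) \<noteq> 0 \<and> v y2 \<noteq> 0 \<and> \<bar>xi y2 - c\<bar> \<le> L}
          = {y2. u (sub y3 y2) \<noteq> 0 \<and> v y2 \<noteq> 0 \<and> xi y2 \<in> {c - L..c + L}}" by auto
      moreover have "(c + L) - (c - L) = 3 * Mw" by (simp add: L_def)
      ultimately show ?thesis using fa[of "c - L" "c + L" y3] L by simp
    qed
    have "(T u v w)^2 \<le> 2 * (ennreal (2 * K) * ennreal (3 * Mw) * N) * U * V * W"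
      unfolding U_def V_def W_def by (rule loc_bound[OF su sv sw L wR E])
    also have "\<dots> = 12 * ennreal Mw * ennreal K * N * U * V * W"
      unfolding ar[OF Mw] by (simp add: mult_ac)
    moreover have "min Mu (min Mv Mw) = Mw" using True by simp
    ultimately show ?thesis
      by (simp add: K_def N_def U_def V_def W_def)
  next
    case False
    then have m: "min Mu (min Mv Mw) = min Mu Mv" by auto
    obtain M where M: "M = min Mu Mv" by simp
    have M0: "M > 0" using M Mu Mv by simp
    have E: "II (\<lambda>y2. indicator {y2. u (sub y3 y2) \<noteq> 0 \<and> v y2 \<noteq> 0} y2)
       \<le> ennreal (2 * K) * ennreal (3 * M) * N" for y3
    proof (cases "Mv \<le> Mu")
      case True
      have "{y2. u (sub y3 y2) \<noteq> 0 \<and> v y2 \<noteq> 0}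
          = {y2. u (sub y3 y2) \<noteq> 0 \<and> v y2 \<noteq> 0 \<and> xi y2 \<in> {-(3*Mv/2)..3*Mv/2}}"
      proof -
        have "xi y2 \<in> {-(3*Mv/2)..3*Mv/2}" if "v y2 \<noteq> 0" for y2
        proof -
          obtain t x k where y2: "y2 = ((t,x),k)" by (metis prod.collapse)
          have "\<bar>x\<bar> \<le> 3*Mv/2" using v that unfolding SP_def y2 by blast
          then show ?thesis by (simp add: y2 xi_def abs_le_iff, linarith)
        qed
        then show ?thesis by auto
      qed
      moreover have "3*Mv/2 - (-(3*Mv/2)) = 3 * M" using True M by simp
      ultimately show ?thesis using fa[of "-(3*Mv/2)" "3*Mv/2" y3] Mv by simp
    next
      case False
      have "{y2. u (sub y3 y2) \<noteq> 0 \<and> v y2 \<noteq> 0}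
          = {y2. u (sub y3 y2) \<noteq> 0 \<and> v y2 \<noteq> 0 \<and> xi y2 \<in> {xi y3 - 3*Mu/2..xi y3 + 3*Mu/2}}"
      proof -
        have "xi y2 \<in> {xi y3 - 3*Mu/2..xi y3 + 3*Mu/2}" if "u (sub y3 y2) \<noteq> 0" for y2
        proof -
          have "\<bar>xi (sub y3 y2)\<bar> \<le> 3*Mu/2"
          proof -
            obtain t x k where y: "sub y3 y2 = ((t,x),k)" by (metis prod.collapse)
            have "\<bar>x\<bar> \<le> 3*Mu/2" using u that unfolding SP_def y by blast
            then show ?thesis by (simp add: y xi_def)
          qed
          then show ?thesis unfolding xi_sub abs_le_iff atLeastAtMost_iff by linarith
        qed
        then show ?thesis by auto
      qed
      moreover have "(xi y3 + 3*Mu/2) - (xi y3 - 3*Mu/2) = 3 * M" using False M by simp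
      ultimately show ?thesis using fa[of "xi y3 - 3*Mu/2" "xi y3 + 3*Mu/2" y3] Mu by simp
    qed
    have "(T u v w)^2 \<le> (ennreal (2 * K) * ennreal (3 * M) * N) * U * V * W"
      unfolding U_def V_def W_def by (rule fiber_bound[OF su sv sw E])
    also have "\<dots> = 6 * ennreal M * ennreal K * N * U * V * W"
      unfolding ar[OF M0] by (simp add: mult_ac)
    also have "\<dots> \<le> 12 * ennreal M * ennreal K * N * U * V * W"
      by (intro mult_right_mono) auto
    finally show ?thesis unfolding m M[symmetric]
      by (simp add: K_def N_def U_def V_def W_def)
  qed
qed




definition emb :: "real \<Rightarrow> (real\<times>real\<times>real \<Rightarrow> ennreal) \<Rightarrow> pt \<Rightarrow> ennreal" where
  "emb lam F y = F (fst (fst y), snd (fst y), of_int (snd y) / lam)"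

lemma lint_II:
  assumes "emb lam F \<in> borel_measurable Y"
  shows "lint lam F = ennreal (1/lam) * II (emb lam F)"
proof -
  have m: "(\<lambda>y. ennreal (1/lam) * emb lam F y) \<in> borel_measurable Y" using assms by measurable
  have "lint lam F = II (\<lambda>y. ennreal (1/lam) * emb lam F y)"
    unfolding lint_def by (subst II_iter[OF m]) (simp add: emb_def)
  also have "\<dots> = ennreal (1/lam) * II (emb lam F)"
    unfolding II_def using assms by (rule nn_integral_cmult)
  finally show ?thesis .
qed

lemma conv_II:
  assumes lam: "lam \<noteq> 0" and sF: "slm (emb lam F)" and sG: "slm (emb lam G)"
  shows "conv lam F G (fst a, snd a, of_int k / lam) = ennreal (1/lam) * II (\<lambda>y2. emb lam F (sub (a,k) y2) * emb lam G y2)"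
proof -
  define H where "H = (\<lambda>(\<tau>', \<xi>', q'). F (fst a - \<tau>', snd a - \<xi>', of_int k / lam - q') * G (\<tau>', \<xi>', q'))"
  have e: "emb lam H = (\<lambda>y2. emb lam F (sub (a,k) y2) * emb lam G y2)"
  proof
    fix y2 :: pt
    have "of_int k / lam - of_int (snd y2) / lam = of_int (k - snd y2) / lam"
      by (simp add: diff_divide_distrib)
    then show "emb lam H y2 = emb lam F (sub (a,k) y2) * emb lam G y2"
      by (simp add: emb_def H_def sub_def)
  qed
  have "conv lam F G (fst a, snd a, of_int k / lam) = lint lam H"
    unfolding conv_def H_def by (simp add: case_prod_beta)
  also have "\<dots> = ennreal (1/lam) * II (emb lam H)"
    by (rule lint_II) (simp add: e slm_meas slm_mult slm_sub1 sF sG)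
  finally show ?thesis unfolding e .
qed

lemma japan_abs: "japan s \<le> K \<Longrightarrow> \<bar>s\<bar> \<le> K"
proof -
  assume a: "japan s \<le> K"
  have "\<bar>s\<bar> = sqrt (s^2)" by simp
  also have "\<dots> \<le> sqrt (1 + s^2)" by (rule real_sqrt_le_mono) simp
  finally show ?thesis using a by (simp add: japan_def)
qed

lemma omega_neg: "omega (-x) (-q) = - omega x q"
  by (simp add: omega_def)

lemma SP_rf: assumes "SP lam u M K N" shows "SP lam (rf u) M K {k. 0 - k \<in> N}"
  unfolding SP_def
proof (intro allI impI)
  fix t x k
  assume "rf u ((t,x),k) \<noteq> 0"
  then have "u ((-t,-x),-k) \<noteq> 0" by (simp add: rf_def sub_def)
  then have "\<bar>-x\<bar> \<le> 3*M/2 \<and> \<bar>-t - omega (-x) (of_int (-k) / lam)\<bar> \<le> K \<and> -k \<in> N"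
    using assms unfolding SP_def by blast
  then show "\<bar>x\<bar> \<le> 3*M/2 \<and> \<bar>t - omega x (of_int k / lam)\<bar> \<le> K \<and> k \<in> {k. 0 - k \<in> N}"
    by (simp add: omega_neg[of x "of_int k / lam", simplified] abs_minus_commute)
qed

lemma sel3:
  fixes a1 a2 a3 :: "'a::linorder" and b1 b2 b3 :: "'b::linorder"
  shows "(min a1 a2 \<le> a3 \<and> min b1 b2 \<le> b3) \<or> (min a1 a3 \<le> a2 \<and> min b1 b3 \<le> b2) \<or> (min a2 a3 \<le> a1 \<and> min b2 b3 \<le> b1)"
  by (auto simp: min_def)

lemma T_all:
  assumes s1: "slm h1" and s2: "slm h2" and s3: "slm h3"
    and h1: "SP lam h1 M1 K1 N1" and h2: "SP lam h2 M2 K2 N2" and h3: "SP lam h3 M3 K3 N3"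
    and M: "M1 > 0" "M2 > 0" "M3 > 0" and K: "K1 \<ge> 0" "K2 \<ge> 0" "K3 \<ge> 0"
  shows "(T h1 h2 h3)^2 \<le> 12 * ennreal (min M1 (min M2 M3)) * ennreal (min K1 (min K2 K3))
        * min (cnt N1) (min (cnt N2) (cnt N3)) * II (\<lambda>y. h1 y^2) * II (\<lambda>y. h2 y^2) * II (\<lambda>y. h3 y^2)"
proof -
  have c1: "cnt {k. 0 - k \<in> N1} = cnt N1" "cnt {k. 0 - k \<in> N2} = cnt N2" by (rule cnt_refl)+
  consider (a) "min K1 K2 \<le> K3 \<and> min (cnt N1) (cnt N2) \<le> cnt N3"
    | (b) "min K1 K3 \<le> K2 \<and> min (cnt N1) (cnt N3) \<le> cnt N2"
    | (c) "min K2 K3 \<le> K1 \<and> min (cnt N2) (cnt N3) \<le> cnt N1"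
    using sel3 by blast
  then show ?thesis
  proof cases
    case a
    then have e: "min K1 K2 = min K1 (min K2 K3)" "min (cnt N1) (cnt N2) = min (cnt N1) (min (cnt N2) (cnt N3))"
      by (auto simp: min_def)
    show ?thesis unfolding e[symmetric] by (rule core[OF s1 s2 s3 h1 h2 h3 M(1) M(2) M(3) K(1) K(2)])
  next
    case b
    then have e: "min K1 K3 = min K1 (min K2 K3)" "min (cnt N1) (cnt N3) = min (cnt N1) (min (cnt N2) (cnt N3))"
      by (auto simp: min_def)
    have em: "min M1 (min M3 M2) = min M1 (min M2 M3)" by (simp add: min_def)
    have "T h1 h2 h3 = T (rf h1) h3 h2" by (rule T_rot[OF s1 s2 s3])
    moreover have "(T (rf h1) h3 h2)^2 \<le> 12 * ennreal (min M1 (min M3 M2)) * ennreal (min K1 K3) * min (cnt {k. 0 - k \<in> N1}) (cnt N3)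
        * II (\<lambda>y. rf h1 y^2) * II (\<lambda>y. h3 y^2) * II (\<lambda>y. h2 y^2)"
      by (rule core[OF slm_rf[OF s1] s3 s2 SP_rf[OF h1] h3 h2 M(1) M(3) M(2) K(1) K(3)])
    ultimately show ?thesis unfolding e[symmetric] em[symmetric] c1 II_rf_sq[OF s1]
      by (metis (no_types, lifting) mult.commute mult.left_commute)
  next
    case c
    then have e: "min K2 K3 = min K1 (min K2 K3)" "min (cnt N2) (cnt N3) = min (cnt N1) (min (cnt N2) (cnt N3))"
      by (auto simp: min_def)
    have em: "min M2 (min M3 M1) = min M1 (min M2 M3)" by (simp add: min_def)
    have "T h1 h2 h3 = T h2 h1 h3" by (rule T_swap[OF s1 s2])
    also have "\<dots> = T (rf h2) h3 h1" by (rule T_rot[OF s2 s1 s3])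
    finally have "T h1 h2 h3 = T (rf h2) h3 h1" .
    moreover have "(T (rf h2) h3 h1)^2 \<le> 12 * ennreal (min M2 (min M3 M1)) * ennreal (min K2 K3) * min (cnt {k. 0 - k \<in> N2}) (cnt N3)
        * II (\<lambda>y. rf h2 y^2) * II (\<lambda>y. h3 y^2) * II (\<lambda>y. h1 y^2)"
      by (rule core[OF slm_rf[OF s2] s3 s1 SP_rf[OF h2] h3 h1 M(2) M(3) M(1) K(2) K(3)])
    ultimately show ?thesis unfolding e[symmetric] em[symmetric] c1 II_rf_sq[OF s2]
      by (metis (no_types, lifting) mult.commute mult.left_commute)
  qed
qed




lemma min_cmult: "min (c * a) (c * b) = (c::ennreal) * min a b"
proof (cases "a \<le> b")
  case True
  then have "c * a \<le> c * b" by (rule mult_left_mono) simp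
  then show ?thesis using True by (simp add: min_def)
next
  case False
  then have "c * b \<le> c * a" by (intro mult_left_mono) auto
  then show ?thesis using False by (simp add: min_def)
qed

lemma ennreal_sqrt_esqrt: "x \<ge> 0 \<Longrightarrow> ennreal (sqrt x) = esqrt (ennreal x)"
  by (simp add: esqrt_def)

lemma final_ineq:
  fixes c T n U1 U2 U3 :: ennreal
  assumes "T^2 \<le> 12 * ennreal mr * ennreal kr * n * U1 * U2 * U3"
  shows "c^2 * T \<le> esqrt 12 * esqrt (ennreal mr) * esqrt (ennreal kr) * esqrt (c * n) * (esqrt (c*U1) * esqrt (c*U2) * esqrt (c*U3))"
proof -
  have "c^2 * T = esqrt ((c^2 * T)^2)" by simp
  also have "\<dots> \<le> esqrt (c^4 * (12 * ennreal mr * ennreal kr * n * U1 * U2 * U3))"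
  proof (rule esqrt_mono)
    have "(c^2 * T)^2 = c^4 * T^2" by (simp add: power_mult_distrib power_mult[symmetric])
    also have "\<dots> \<le> c^4 * (12 * ennreal mr * ennreal kr * n * U1 * U2 * U3)"
      by (rule mult_left_mono[OF assms]) simp
    finally show "(c^2 * T)^2 \<le> c^4 * (12 * ennreal mr * ennreal kr * n * U1 * U2 * U3)" .
  qed
  also have "c^4 * (12 * ennreal mr * ennreal kr * n * U1 * U2 * U3) = 12 * ennreal mr * ennreal kr * (c * n) * ((c*U1) * (c*U2) * (c*U3))"
    by (simp add: power_def mult_ac eval_nat_numeral)
  also have "esqrt \<dots> = esqrt 12 * esqrt (ennreal mr) * esqrt (ennreal kr) * esqrt (c * n) * (esqrt (c*U1) * esqrt (c*U2) * esqrt (c*U3))"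
    by (simp only: esqrt_mult)
  finally show ?thesis .
qed

theorem mainTheorem9:
  "\<exists>C>0. \<forall>(lam::real) (M :: nat \<Rightarrow> real) (K :: nat \<Rightarrow> real) (I :: nat \<Rightarrow> real set)
           (f :: nat \<Rightarrow> real \<times> real \<times> real \<Rightarrow> complex).
     lam \<ge> 1 \<longrightarrow>
     (\<forall>i\<in>{1,2,3}.
        (\<exists>j::int. M i = 2 powr j) \<and> (\<exists>n::nat. K i = 2 ^ n) \<and> I i \<subseteq> lattice lam \<and>
        (\<forall>k::int. (\<lambda>p. f i (fst p, snd p, of_int k / lam)) \<in> borel_measurable lborel) \<and>
        L2sq lam (f i) < \<infinity> \<and>
        (\<forall>x. f i x \<noteq> 0 \<longrightarrow> x \<in> Dset lam (M i) (K i) \<and> snd (snd x) \<in> I i)) \<longrightarrow>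
     lint lam (\<lambda>x. conv lam (\<lambda>y. ennreal (norm (f 1 y))) (\<lambda>y. ennreal (norm (f 2 y))) x
                  * ennreal (norm (f 3 x)))
       \<le> ennreal C * ennreal (sqrt (min (M 1) (min (M 2) (M 3))))
           * ennreal (sqrt (min (K 1) (min (K 2) (K 3))))
           * esqrt (min (qmeas lam (I 1)) (min (qmeas lam (I 2)) (qmeas lam (I 3))))
           * ennreal (L2norm lam (f 1) * L2norm lam (f 2) * L2norm lam (f 3))"
proof (rule exI[of _ "sqrt 12"], intro conjI allI impI)
  show "(0::real) < sqrt 12" by simp
  fix lam :: real and M K :: "nat \<Rightarrow> real" and I :: "nat \<Rightarrow> real set" and f :: "nat \<Rightarrow> real \<times> real \<times> real \<Rightarrow> complex"
  assume lam: "lam \<ge> 1"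
  assume H: "\<forall>i\<in>{1,2,3}.
        (\<exists>j::int. M i = 2 powr j) \<and> (\<exists>n::nat. K i = 2 ^ n) \<and> I i \<subseteq> lattice lam \<and>
        (\<forall>k::int. (\<lambda>p. f i (fst p, snd p, of_int k / lam)) \<in> borel_measurable lborel) \<and>
        L2sq lam (f i) < \<infinity> \<and>
        (\<forall>x. f i x \<noteq> 0 \<longrightarrow> x \<in> Dset lam (M i) (K i) \<and> snd (snd x) \<in> I i)"
  define F where "F i = (\<lambda>y. ennreal (norm (f i y)))" for i
  define h where "h i = emb lam (F i)" for i
  define N where "N i = {k::int. of_int k / lam \<in> I i}" for i
  define U where "U i = II (\<lambda>y. h i y ^ 2)" for i
  define c where "c = ennreal (1/lam)"
  have lam0: "lam \<noteq> 0" using lam by simp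
  have Hi: "(\<exists>j::int. M i = 2 powr j) \<and> (\<exists>n::nat. K i = 2 ^ n) \<and> I i \<subseteq> lattice lam \<and>
        (\<forall>k::int. (\<lambda>p. f i (fst p, snd p, of_int k / lam)) \<in> borel_measurable lborel) \<and>
        L2sq lam (f i) < \<infinity> \<and>
        (\<forall>x. f i x \<noteq> 0 \<longrightarrow> x \<in> Dset lam (M i) (K i) \<and> snd (snd x) \<in> I i)" if "i \<in> {1,2,3}" for i
    using H that by (rule bspec)
  have sh: "slm (h i)" if "i \<in> {1,2,3}" for i
    unfolding slm_def
  proof
    fix k
    have "(\<lambda>p. f i (fst p, snd p, of_int k / lam)) \<in> borel_measurable borel"
      using Hi[OF that] by simp
    then have "(\<lambda>p. ennreal (norm (f i (fst p, snd p, of_int k / lam)))) \<in> borel_measurable borel"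
      by measurable
    then show "(\<lambda>a. h i (a, k)) \<in> borel_measurable borel"
      by (simp add: h_def emb_def F_def)
  qed
  have SPh: "SP lam (h i) (M i) (K i) (N i)" if "i \<in> {1,2,3}" for i
    unfolding SP_def
  proof (intro allI impI)
    fix t x k
    assume "h i ((t,x),k) \<noteq> 0"
    then have "f i (t, x, of_int k / lam) \<noteq> 0" by (simp add: h_def emb_def F_def)
    then have "(t, x, of_int k / lam) \<in> Dset lam (M i) (K i) \<and> of_int k / lam \<in> I i"
      using Hi[OF that] by fastforce
    then show "\<bar>x\<bar> \<le> 3 * M i / 2 \<and> \<bar>t - omega x (of_int k / lam)\<bar> \<le> K i \<and> k \<in> N i"
      by (auto simp: Dset_def N_def sigma_def intro: japan_abs)
  qed
  have Mpos: "M i > 0" if "i \<in> {1,2,3}" for i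
    using Hi[OF that] by auto
  have Kpos: "K i \<ge> 0" if "i \<in> {1,2,3}" for i
    using Hi[OF that] by auto
  have L2: "L2sq lam (f i) = c * U i" if "i \<in> {1,2,3}" for i
  proof -
    have e: "emb lam (\<lambda>x. ennreal (norm (f i x) ^ 2)) = (\<lambda>y. h i y ^ 2)"
      by (auto simp: emb_def h_def F_def ennreal_power fun_eq_iff)
    show ?thesis unfolding L2sq_def c_def U_def
      by (subst lint_II) (simp_all add: e slm_meas slm_power sh[OF that])
  qed
  have Lnorm: "ennreal (L2norm lam (f i)) = esqrt (c * U i)" if "i \<in> {1,2,3}" for i
  proof -
    have "L2sq lam (f i) \<noteq> \<infinity>" using Hi[OF that] by auto
    then show ?thesis unfolding L2norm_def L2(1)[OF that, symmetric] esqrt_def by simp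
  qed
  have qm: "qmeas lam (I i) = c * cnt (N i)" for i
    by (simp add: qmeas_def cnt_def N_def c_def)
  have LHS: "lint lam (\<lambda>x. conv lam (\<lambda>y. ennreal (norm (f 1 y))) (\<lambda>y. ennreal (norm (f 2 y))) x * ennreal (norm (f 3 x)))
     = c^2 * T (h 1) (h 2) (h 3)"
  proof -
    have s1: "slm (h 1)" and s2: "slm (h 2)" and s3: "slm (h 3)" by (auto intro: sh)
    define P where "P y = II (\<lambda>y2. h 1 (sub y y2) * h 2 y2)" for y
    have mP: "P \<in> borel_measurable Y"
      unfolding P_def using int2_meas[OF conv_meas[OF s1 s2]] by simp
    have e: "emb lam (\<lambda>x. conv lam (F 1) (F 2) x * F 3 x) = (\<lambda>y. c * (P y * h 3 y))"
    proof
      fix y :: pt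
      have "conv lam (F 1) (F 2) (fst (fst y), snd (fst y), of_int (snd y) / lam) = c * P y"
        using conv_II[OF lam0, of "F 1" "F 2" "fst y" "snd y"] s1 s2
        by (simp add: h_def P_def c_def)
      then show "emb lam (\<lambda>x. conv lam (F 1) (F 2) x * F 3 x) y = c * (P y * h 3 y)"
        by (simp add: emb_def h_def mult_ac)
    qed
    have m: "(\<lambda>y. c * (P y * h 3 y)) \<in> borel_measurable Y"
      using mP slm_meas[OF s3] by measurable
    have "lint lam (\<lambda>x. conv lam (F 1) (F 2) x * F 3 x) = ennreal (1/lam) * II (emb lam (\<lambda>x. conv lam (F 1) (F 2) x * F 3 x))"
      by (rule lint_II) (unfold e, rule m)
    also have "\<dots> = c * II (\<lambda>y. c * (P y * h 3 y))"
      unfolding e c_def ..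
    also have "II (\<lambda>y. c * (P y * h 3 y)) = c * II (\<lambda>y. P y * h 3 y)"
      unfolding II_def by (rule nn_integral_cmult) (use mP slm_meas[OF s3] in measurable)
    also have "II (\<lambda>y. P y * h 3 y) = T (h 1) (h 2) (h 3)"
      unfolding T_def P_def ..
    finally show ?thesis by (simp add: F_def power2_eq_square mult_ac)
  qed
  have Tb: "(T (h 1) (h 2) (h 3))^2 \<le> 12 * ennreal (min (M 1) (min (M 2) (M 3))) * ennreal (min (K 1) (min (K 2) (K 3)))
        * min (cnt (N 1)) (min (cnt (N 2)) (cnt (N 3))) * U 1 * U 2 * U 3"
    unfolding U_def
    by (rule T_all) (auto intro: sh SPh Mpos Kpos)
  have mM: "min (M 1) (min (M 2) (M 3)) \<ge> 0" using Mpos[of 1] Mpos[of 2] Mpos[of 3] by simp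
  have mK: "min (K 1) (min (K 2) (K 3)) \<ge> 0" using Kpos[of 1] Kpos[of 2] Kpos[of 3] by simp
  have Lprod: "ennreal (L2norm lam (f 1) * L2norm lam (f 2) * L2norm lam (f 3))
      = esqrt (c * U 1) * esqrt (c * U 2) * esqrt (c * U 3)"
    by (simp add: ennreal_mult L2norm_def Lnorm[symmetric])
  show "lint lam (\<lambda>x. conv lam (\<lambda>y. ennreal (norm (f 1 y))) (\<lambda>y. ennreal (norm (f 2 y))) x * ennreal (norm (f 3 x)))
       \<le> ennreal (sqrt 12) * ennreal (sqrt (min (M 1) (min (M 2) (M 3))))
           * ennreal (sqrt (min (K 1) (min (K 2) (K 3))))
           * esqrt (min (qmeas lam (I 1)) (min (qmeas lam (I 2)) (qmeas lam (I 3))))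
           * ennreal (L2norm lam (f 1) * L2norm lam (f 2) * L2norm lam (f 3))"
    unfolding LHS Lprod qm min_cmult
      ennreal_sqrt_esqrt[OF mM] ennreal_sqrt_esqrt[OF mK] ennreal_sqrt_esqrt[of 12, simplified]
    by (rule final_ineq[OF Tb])
qed


end
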